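(* Suppose that the solution set of problem $\min_{\boldsymbol\lambda,\mathbf p,\boldsymbol\mu\in\mathbb{R}^{N_h}}\Phi_h(\boldsymbol\lambda,\mathbf p,\boldsymbol\mu)$ is non-empty and let $\mathbf z^*=(\boldsymbol\lambda^*,\mathbf p^*,\boldsymbol\mu^* )$ be a solution. Let $\{\mathbf z^k\}=\{(\boldsymbol\lambda^k,\mathbf p^k,\boldsymbol\mu^k)\}$ be the sequence generated by the discrete sGS-mABCD algorithm started from $\mathbf z^0=(\boldsymbol\lambda^0,\mathbf p^0,\boldsymbol\mu^0)$. Then $$\Phi_h(\mathbf z^k)-\Phi_h(\mathbf z^* )\le\frac{4\tau_h}{(k+1)^2}\quad\forall k\ge1,\qquad \tau_h=\tfrac12\|\mathbf z^0-\mathbf z^*\|_{\mathcal S_h}^2,$$ where $$\mathcal S_h=\frac1\alpha\begin{pmatrix}M_hG_h^{-1}M_h+W_h-M_h&0&0\\0&0&0\\0&0&\gamma M_hW_h^{-1}M_h\end{pmatrix},\qquad G_h=M_h+\alpha K_hM_h^{-1}K_h.$$ Moreover, the sequence $\{(\boldsymbol\lambda^k,\mathbf p^k,\boldsymbol\mu^k)\}$ is bounded.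
   Context: Setting: $\Omega\subset\mathbb{R}^n$, $n\in\{2,3\}$, convex bounded domain; $\{\mathcal T_h\}$ regular quasi-uniform triangulations with mesh size $h$; $Y_h$ the space of continuous piecewise linear functions on $\mathcal T_h$ vanishing outside $\Omega_h$, with nodal basis $\{\phi_i\}_{i=1}^{N_h}$. The bilinear form is $a(y,v)=\int_\Omega(\sum_{i,j}a_{ji}y_{x_i}v_{x_j}+c_0yv)\,dx$ with $a_{ij}=a_{ji}, c_0\in L^\infty$, $c_0\ge0$, uniformly elliptic. Matrices: stiffness $K_h=(a(\phi_i,\phi_j))_{i,j}$, mass $M_h=(\int_{\Omega_h}\phi_i\phi_j\,dx)_{i,j}$, lumped mass $W_h=\mathrm{diag}(\int_{\Omega_h}\phi_i\,dx)_i$; $\gamma=4$ if $n=2$, $\gamma=5$ if $n=3$ (so that $\mathbf z^TM_h\mathbf z\le\mathbf z^TW_h\mathbf z\le\gamma\,\mathbf z^TM_h\mathbf z$). $\mathbf y_d,\mathbf y_r\in\mathbb{R}^{N_h}$ are coefficient vectors of the $L^2$-projections of $y_d,y_r\in L^2(\Omega)$ onto $Y_h$; $a\le0\le b$, $\alpha,\beta>0$. For a symmetric positive (semi)definite $P$, $\|\mathbf x\|_P^2=\mathbf x^TP\mathbf x$. The discrete dual objective is $$\Phi_h(\boldsymbol\lambda,\mathbf p,\boldsymbol\mu)=\tfrac12\|K_h\mathbf p-M_h\mathbf y_d\|_{M_h^{-1}}^2+\tfrac1{2\alpha}\|\boldsymbol\lambda+\boldsymbol\mu-\mathbf p\|_{M_h}^2+\langle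 M_h\mathbf y_r,\mathbf p\rangle+\delta_{[-\beta,\beta]}(\boldsymbol\lambda)+\delta^*_{[a,b]}(M_h\boldsymbol\mu)-\tfrac12\|\mathbf y_d\|_{M_h}^2,$$ where $\delta_{[-\beta,\beta]}$ is the indicator of the box $[-\beta,\beta]^{N_h}$ and $\delta^*_{[a,b]}(\boldsymbol\xi)=\sum_i\max(a\xi_i,b\xi_i)$. Discrete sGS-mABCD algorithm: given $\mathbf z^0$ with $\boldsymbol\lambda^0\in[-\beta,\beta]^{N_h}$, set $(\tilde{\boldsymbol\lambda}^1,\tilde{\mathbf p}^1,\tilde{\boldsymbol\mu}^1)=\mathbf z^0$, $t_1=1$. For $k\ge1$: (i) $\hat{\mathbf p}^k=\arg\min_{\mathbf p}\{\tfrac12\|K_h\mathbf p-M_h\mathbf y_d\|_{M_h^{-1}}^2+\tfrac1{2\alpha}\|\mathbf p-\tilde{\boldsymbol\lambda}^k-\tilde{\boldsymbol\mu}^k\|_{M_h}^2+\langle M_h\mathbf y_r,\mathbf p\rangle\}$; (ii) $\boldsymbol\lambda^k=\arg\min_{\boldsymbol\lambda}\{\delta_{[-\beta,\beta]}(\boldsymbol\lambda)+\tfrac1{2\alpha}\|\boldsymbol\lambda-(\hat{\mathbf p}^k-\tilde{\boldsymbol\mu}^k)\|_{M_h}^2+\tfrac1{2\alpha}\|\boldsymbol\lambda-\tilde{\boldsymbol\lambda}^k\|_{W_h-M_h}^2\}$ $=\Pi_{[-\beta,\beta]}(\tilde{\boldsymbol\lambda}^k+W_h^{-1}M_h(\hat{\mathbf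 p}^k-\tilde{\boldsymbol\mu}^k-\tilde{\boldsymbol\lambda}^k))$; (iii) $\mathbf p^k$ is defined as in (i) with $\tilde{\boldsymbol\lambda}^k$ replaced by $\boldsymbol\lambda^k$; (iv) $\boldsymbol\mu^k=\arg\min_{\boldsymbol\mu}\{\delta^*_{[a,b]}(M_h\boldsymbol\mu)+\tfrac1{2\alpha}\|\boldsymbol\mu-(\mathbf p^k-\boldsymbol\lambda^k)\|_{M_h}^2+\tfrac1{2\alpha}\|\boldsymbol\mu-\tilde{\boldsymbol\mu}^k\|^2_{\gamma M_hW_h^{-1}M_h-M_h}\}$; (v) $t_{k+1}=\frac{1+\sqrt{1+4t_k^2}}2$, $\beta_k=\frac{t_k-1}{t_{k+1}}$, $\tilde{\boldsymbol\lambda}^{k+1}=\boldsymbol\lambda^k+\beta_k(\boldsymbol\lambda^k-\boldsymbol\lambda^{k-1})$, and likewise for $\tilde{\mathbf p}^{k+1}$, $\tilde{\boldsymbol\mu}^{k+1}$. *)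

theory Defs
  imports "HOL-Analysis.Analysis"
begin

definition qf :: "real^'n^'n \<Rightarrow> real^'n \<Rightarrow> real" where
  "qf P x = x \<bullet> (P *v x)"

definition in_box :: "real \<Rightarrow> real^'n \<Rightarrow> bool" where
  "in_box \<beta> l \<longleftrightarrow> (\<forall>i. - \<beta> \<le> l $ i \<and> l $ i \<le> \<beta>)"

text \<open>Support function of [a,b]^N: sum_i max(a xi_i, b xi_i).\<close>
definition dstar :: "real \<Rightarrow> real \<Rightarrow> real^'n \<Rightarrow> real" where
  "dstar a b \<xi> = (\<Sum>i\<in>UNIV. max (a * \<xi> $ i) (b * \<xi> $ i))"

text \<open>Discrete dual objective Phi_h (extended-real valued; the indicator of the box gives +infinity).\<close>
definition Phi_h :: "real^'n^'n \<Rightarrow> real^'n^'n \<Rightarrow> real^'n \<Rightarrow> real^'n \<Rightarrow> real \<Rightarrow> real \<Rightarrow> real \<Rightarrow> real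
    \<Rightarrow> real^'n \<Rightarrow> real^'n \<Rightarrow> real^'n \<Rightarrow> ereal" where
  "Phi_h K M yd yr \<alpha> \<beta> a b l p m =
     (if in_box \<beta> l then
        ereal (1/2 * qf (matrix_inv M) (K *v p - M *v yd)
               + 1/(2*\<alpha>) * qf M (l + m - p)
               + (M *v yr) \<bullet> p
               + dstar a b (M *v m)
               - 1/2 * qf M yd)
      else \<infinity>)"

text \<open>Objective of the p-subproblems (i) and (iii), given lt (lambda) and mt (mu).\<close>
definition Fp :: "real^'n^'n \<Rightarrow> real^'n^'n \<Rightarrow> real^'n \<Rightarrow> real^'n \<Rightarrow> real
    \<Rightarrow> real^'n \<Rightarrow> real^'n \<Rightarrow> real^'n \<Rightarrow> real" where
  "Fp K M yd yr \<alpha> lt mt p =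
     1/2 * qf (matrix_inv M) (K *v p - M *v yd) + 1/(2*\<alpha>) * qf M (p - lt - mt) + (M *v yr) \<bullet> p"

text \<open>The discrete sGS-mABCD iteration: lam, p, mu are the generated sequences
  (index 0 = initial point z^0); lt, pt, mt are the extrapolated points,
  ph the auxiliary p-hat iterates, t the momentum parameters.\<close>
definition sgs_mabcd :: "real^'n^'n \<Rightarrow> real^'n^'n \<Rightarrow> real^'n^'n \<Rightarrow> real \<Rightarrow> real^'n \<Rightarrow> real^'n
    \<Rightarrow> real \<Rightarrow> real \<Rightarrow> real \<Rightarrow> real
    \<Rightarrow> (nat \<Rightarrow> real^'n) \<Rightarrow> (nat \<Rightarrow> real^'n) \<Rightarrow> (nat \<Rightarrow> real^'n) \<Rightarrow> bool" where
  "sgs_mabcd K M W \<gamma> yd yr \<alpha> \<beta> a b lam p mu \<longleftrightarrow>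
    (\<exists>lt pt mt ph (t :: nat \<Rightarrow> real).
       lt 1 = lam 0 \<and> pt 1 = p 0 \<and> mt 1 = mu 0 \<and> t 1 = 1 \<and>
       (\<forall>k\<ge>1.
          (\<forall>q. Fp K M yd yr \<alpha> (lt k) (mt k) (ph k) \<le> Fp K M yd yr \<alpha> (lt k) (mt k) q) \<and>
          in_box \<beta> (lam k) \<and>
          (\<forall>l. in_box \<beta> l \<longrightarrow>
              1/(2*\<alpha>) * qf M (lam k - (ph k - mt k)) + 1/(2*\<alpha>) * qf (W - M) (lam k - lt k)
              \<le> 1/(2*\<alpha>) * qf M (l - (ph k - mt k)) + 1/(2*\<alpha>) * qf (W - M) (l - lt k)) \<and>
          (\<forall>q. Fp K M yd yr \<alpha> (lam k) (mt k) (p k) \<le> Fp K M yd yr \<alpha> (lam k) (mt k) q) \<and>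
          (\<forall>m. dstar a b (M *v mu k) + 1/(2*\<alpha>) * qf M (mu k - (p k - lam k))
                 + 1/(2*\<alpha>) * qf (\<gamma> *\<^sub>R (M ** matrix_inv W ** M) - M) (mu k - mt k)
               \<le> dstar a b (M *v m) + 1/(2*\<alpha>) * qf M (m - (p k - lam k))
                 + 1/(2*\<alpha>) * qf (\<gamma> *\<^sub>R (M ** matrix_inv W ** M) - M) (m - mt k)) \<and>
          t (k+1) = (1 + sqrt (1 + 4 * (t k)\<^sup>2)) / 2 \<and>
          lt (k+1) = lam k + ((t k - 1) / t (k+1)) *\<^sub>R (lam k - lam (k-1)) \<and>
          pt (k+1) = p k + ((t k - 1) / t (k+1)) *\<^sub>R (p k - p (k-1)) \<and>
          mt (k+1) = mu k + ((t k - 1) / t (k+1)) *\<^sub>R (mu k - mu (k-1))))"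

definition tau_h :: "real^'n^'n \<Rightarrow> real^'n^'n \<Rightarrow> real^'n^'n \<Rightarrow> real \<Rightarrow> real
    \<Rightarrow> real^'n \<Rightarrow> real^'n \<Rightarrow> real^'n \<Rightarrow> real^'n \<Rightarrow> real" where
  "tau_h K M W \<gamma> \<alpha> l0 m0 ls ms =
     (let G = M + \<alpha> *\<^sub>R (K ** matrix_inv M ** K) in
      1/2 * (1/\<alpha>) * (qf (M ** matrix_inv G ** M + W - M) (l0 - ls)
                       + qf (\<gamma> *\<^sub>R (M ** matrix_inv W ** M)) (m0 - ms)))"

end

theory Submission
  imports Defs
begin


lemma inv_props:
  fixes A :: "real^'n^'n"
  assumes "invertible A"
  shows "A ** matrix_inv A = mat 1" "matrix_inv A ** A = mat 1"
proof -
  have "\<exists>A'. A ** A' = mat 1 \<and> A' ** A = mat 1" using assms unfolding invertible_def by blast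
  hence "A ** matrix_inv A = mat 1 \<and> matrix_inv A ** A = mat 1"
    unfolding matrix_inv_def by (rule someI_ex)
  thus "A ** matrix_inv A = mat 1" "matrix_inv A ** A = mat 1" by auto
qed

lemma pd_invertible:
  fixes P :: "real^'n^'n"
  assumes "\<And>x. x \<noteq> 0 \<Longrightarrow> qf P x > 0"
  shows "invertible P"
proof -
  have "\<forall>x. P *v x = 0 \<longrightarrow> x = 0"
    using assms unfolding qf_def by force
  thus ?thesis using matrix_left_invertible_ker invertible_left_inverse by blast
qed

lemma sym_inv:
  fixes A :: "real^'n^'n"
  assumes "transpose A = A" "invertible A"
  shows "transpose (matrix_inv A) = matrix_inv A"
proof -
  have "transpose (matrix_inv A) ** A = mat 1"
    by (metis assms inv_props(1) matrix_transpose_mul transpose_mat)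
  hence "transpose (matrix_inv A) = transpose (matrix_inv A) ** (A ** matrix_inv A)"
    using inv_props[OF assms(2)] by simp
  also have "\<dots> = matrix_inv A"
    by (simp add: matrix_mul_assoc \<open>transpose (matrix_inv A) ** A = mat 1\<close>)
  finally show ?thesis .
qed

lemma sym_swap:
  fixes P :: "real^'n^'n"
  assumes "transpose P = P"
  shows "x \<bullet> (P *v y) = y \<bullet> (P *v x)"
proof -
  have "x \<bullet> (P *v y) = (x v* P) \<bullet> y" by (simp add: dot_lmul_matrix)
  also have "x v* P = P *v x" by (metis assms vector_transpose_matrix)
  finally show ?thesis by (simp add: inner_commute)
qed

lemma qf_add:
  fixes P :: "real^'n^'n"
  assumes "transpose P = P"
  shows "qf P (x + y) = qf P x + 2 * (x \<bullet> (P *v y)) + qf P y"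
  unfolding qf_def using sym_swap[OF assms, of y x]
  by (simp add: matrix_vector_right_distrib inner_add_left inner_add_right)

lemma qf_diff:
  fixes P :: "real^'n^'n"
  assumes "transpose P = P"
  shows "qf P (x - y) = qf P x - 2 * (x \<bullet> (P *v y)) + qf P y"
  unfolding qf_def using sym_swap[OF assms, of y x]
  by (simp add: matrix_vector_mult_diff_distrib inner_diff_left inner_diff_right)

lemma qf_scale: "qf P (c *\<^sub>R x) = c^2 * qf P x"
  unfolding qf_def by (simp add: matrix_vector_mult_scaleR power2_eq_square)

lemma qf_neg: "qf P (- x) = qf P x"
  using qf_scale[of P "-1" x] by simp

lemma mv_add: "(P + Q) *v x = P *v x + Q *v (x::real^'n)"
  by (simp add: matrix_vector_mult_add_rdistrib)
lemma mv_diff: "(P - Q) *v x = P *v x - Q *v (x::real^'n)"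
  by (simp add: matrix_vector_mult_diff_rdistrib)
lemma mv_mult: "(P ** Q) *v x = P *v (Q *v (x::real^'n))"
  by (simp add: matrix_vector_mul_assoc)
lemma mv_scale: "(c *\<^sub>R P) *v x = c *\<^sub>R (P *v (x::real^'n))"
  by (simp add: scaleR_matrix_vector_assoc)

lemma transpose_scaleR: "transpose (c *\<^sub>R (P::real^'n^'n)) = c *\<^sub>R transpose P"
  by (simp add: transpose_def vec_eq_iff)
lemma transpose_add: "transpose ((P::real^'n^'n) + Q) = transpose P + transpose Q"
  by (simp add: transpose_def vec_eq_iff)
lemma transpose_diff: "transpose ((P::real^'n^'n) - Q) = transpose P - transpose Q"
  by (simp add: transpose_def vec_eq_iff)

lemma vi_lemma:
  fixes \<phi> :: "real \<Rightarrow> real"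
  assumes "\<And>t. 0 < t \<Longrightarrow> t \<le> 1 \<Longrightarrow> \<phi> 0 \<le> \<phi> t"
    and "\<And>t. 0 < t \<Longrightarrow> t \<le> 1 \<Longrightarrow> \<phi> t \<le> \<phi> 0 + t * c + t^2 * e"
  shows "c \<ge> 0"
proof (rule ccontr)
  assume c: "\<not> c \<ge> 0"
  define t where "t = min 1 (- c / (2 * (\<bar>e\<bar> + 1)))"
  have "0 < - c / (2 * (\<bar>e\<bar> + 1))" using c by (intro divide_pos_pos) auto
  hence t0: "0 < t" "t \<le> 1" by (auto simp: t_def)
  have "0 \<le> t * c + t^2 * e" using assms[OF t0] by linarith
  hence "0 \<le> t * (c + t * e)" by (simp add: power2_eq_square algebra_simps)
  hence h: "0 \<le> c + t * e" using t0 by (simp add: zero_le_mult_iff)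
  have "t * \<bar>e\<bar> \<le> (- c / (2 * (\<bar>e\<bar> + 1))) * \<bar>e\<bar>"
    by (rule mult_right_mono) (auto simp: t_def)
  also have "\<dots> \<le> - c / 2"
    using c by (simp add: field_simps)
  finally have "t * \<bar>e\<bar> \<le> - c / 2" .
  moreover have "t * e \<le> t * \<bar>e\<bar>" by (rule mult_left_mono) (use t0 in auto)
  ultimately show False using h c by linarith
qed

lemma in_box_conv:
  assumes "in_box \<beta> x" "in_box \<beta> y" "0 \<le> t" "t \<le> 1"
  shows "in_box \<beta> (x + t *\<^sub>R (y - x))"
proof -
  have "\<And>i. - \<beta> \<le> x $ i + t * (y $ i - x $ i) \<and> x $ i + t * (y $ i - x $ i) \<le> \<beta>"
  proof -
    fix i
    have a: "- \<beta> \<le> x$i" "x$i \<le> \<beta>" "- \<beta> \<le> y$i" "y$i \<le> \<beta>" using assms(1,2) unfolding in_box_def by auto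
    have "x $ i + t * (y $ i - x $ i) = (1 - t) * x$i + t * y$i" by algebra
    moreover have "(1-t) * (-\<beta>) \<le> (1 - t) * x$i" by (rule mult_left_mono) (use a assms in auto)
    moreover have "(1 - t) * x$i \<le> (1-t) * \<beta>" by (rule mult_left_mono) (use a assms in auto)
    moreover have "t * (-\<beta>) \<le> t * y$i" by (rule mult_left_mono) (use a assms in auto)
    moreover have "t * y$i \<le> t * \<beta>" by (rule mult_left_mono) (use a assms in auto)
    ultimately show "- \<beta> \<le> x $ i + t * (y $ i - x $ i) \<and> x $ i + t * (y $ i - x $ i) \<le> \<beta>"
      by (auto simp: algebra_simps)
  qed
  thus ?thesis unfolding in_box_def by simp
qed

lemma dstar_conv:
  fixes u v :: "real^'n"
  assumes "0 \<le> t" "t \<le> 1"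
  shows "dstar a b (u + t *\<^sub>R (v - u)) \<le> dstar a b u + t * (dstar a b v - dstar a b u)"
proof -
  have "\<And>i. max (a * (u + t *\<^sub>R (v - u)) $ i) (b * (u + t *\<^sub>R (v - u)) $ i)
     \<le> (1 - t) * max (a * u $ i) (b * u $ i) + t * max (a * v $ i) (b * v $ i)"
  proof -
    fix i
    have e: "\<And>c. c * (u + t *\<^sub>R (v - u)) $ i = (1 - t) * (c * u$i) + t * (c * v$i)"
      by (simp add: algebra_simps)
    have m1: "(1-t) * (c * u$i) \<le> (1 - t) * max (a * u $ i) (b * u $ i)" if "c = a \<or> c = b" for c
      using assms that by (auto intro!: mult_left_mono)
    have m2: "t * (c * v$i) \<le> t * max (a * v $ i) (b * v $ i)" if "c = a \<or> c = b" for c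
      using assms that by (auto intro!: mult_left_mono)
    show "max (a * (u + t *\<^sub>R (v - u)) $ i) (b * (u + t *\<^sub>R (v - u)) $ i)
     \<le> (1 - t) * max (a * u $ i) (b * u $ i) + t * max (a * v $ i) (b * v $ i)"
      unfolding e using m1[of a] m1[of b] m2[of a] m2[of b] by auto
  qed
  hence "dstar a b (u + t *\<^sub>R (v - u)) \<le> (\<Sum>i\<in>UNIV. (1 - t) * max (a * u $ i) (b * u $ i) + t * max (a * v $ i) (b * v $ i))"
    unfolding dstar_def by (rule sum_mono)
  also have "\<dots> = (1 - t) * dstar a b u + t * dstar a b v"
    unfolding dstar_def by (simp add: sum.distrib sum_distrib_left)
  finally show ?thesis by (simp add: algebra_simps)
qed

lemma dstar_nonneg: "a \<le> 0 \<Longrightarrow> 0 \<le> b \<Longrightarrow> 0 \<le> dstar a b x"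
  unfolding dstar_def
  by (rule sum_nonneg) (metis max.coboundedI1 max.coboundedI2 mult_nonneg_nonneg mult_nonpos_nonpos linear)




lemma qf_inv_nonneg:
  fixes P Q :: "real^'n^'n"
  assumes "P ** Q = mat 1" "\<And>v. qf P v \<ge> 0"
  shows "qf Q w \<ge> 0"
proof -
  have "P *v (Q *v w) = w" by (simp add: matrix_vector_mul_assoc assms(1))
  hence "qf Q w = (P *v (Q *v w)) \<bullet> (Q *v w)" unfolding qf_def by simp
  also have "\<dots> = qf P (Q *v w)" unfolding qf_def by (simp add: inner_commute)
  finally show ?thesis using assms(2) by simp
qed

lemma qf_mult_sym:
  fixes P Q :: "real^'n^'n"
  assumes "transpose P = P"
  shows "qf (P ** Q ** P) x = qf Q (P *v x)"
  unfolding qf_def by (simp add: mv_mult sym_swap[OF assms, of x] inner_commute)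

lemma sym_mult3:
  fixes P Q :: "real^'n^'n"
  assumes "transpose P = P" "transpose Q = Q"
  shows "transpose (P ** Q ** P) = P ** Q ** P"
  by (simp add: matrix_transpose_mul assms matrix_mul_assoc)

locale setting =
  fixes K M W :: "real^'n^'n" and yd yr :: "real^'n" and \<alpha> \<beta> a b \<gamma> :: real
  assumes K_sym: "transpose K = K" and K_pd: "\<And>x. x \<noteq> 0 \<Longrightarrow> qf K x > 0"
    and M_sym: "transpose M = M" and M_pd: "\<And>x. x \<noteq> 0 \<Longrightarrow> qf M x > 0"
    and W_diag: "\<And>i j. i \<noteq> j \<Longrightarrow> W $ i $ j = 0" and W_pos: "\<And>i. W $ i $ i > 0"
    and MW: "\<And>z. qf M z \<le> qf W z" and WM: "\<And>z. qf W z \<le> \<gamma> * qf M z"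
    and a0: "a \<le> 0" and b0: "0 \<le> b" and alpha: "\<alpha> > 0" and beta: "\<beta> > 0" and gpos: "\<gamma> > 0"
begin

definition "Mi = matrix_inv M"
definition "Wi = matrix_inv W"
definition "G = M + \<alpha> *\<^sub>R (K ** Mi ** K)"
definition "Gi = matrix_inv G"
definition "A = M ** Gi ** M + W - M"
definition "B = \<gamma> *\<^sub>R (M ** Wi ** M)"
definition "D = B - M"

definition "PhiR l p m = 1/2 * qf Mi (K *v p - M *v yd) + 1/(2*\<alpha>) * qf M (l + m - p)
               + (M *v yr) \<bullet> p + dstar a b (M *v m) - 1/2 * qf M yd"
definition "NS l m = 1/2 * (1/\<alpha>) * (qf A l + qf B m)"

lemma qfM_nonneg: "qf M x \<ge> 0"
  using M_pd[of x] by (cases "x = 0") (auto simp: qf_def)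
lemma qfK_nonneg: "qf K x \<ge> 0"
  using K_pd[of x] by (cases "x = 0") (auto simp: qf_def)

lemma M_inv: "invertible M" using pd_invertible M_pd by blast
lemma M_Mi: "M ** Mi = mat 1" "Mi ** M = mat 1" using inv_props[OF M_inv] by (auto simp: Mi_def)
lemma Mi_sym: "transpose Mi = Mi" using sym_inv[OF M_sym M_inv] by (simp add: Mi_def)
lemma qfMi_nonneg: "qf Mi x \<ge> 0" using qf_inv_nonneg[OF M_Mi(1) qfM_nonneg] .

lemma W_sym: "transpose W = W"
  unfolding transpose_def by (simp add: vec_eq_iff) (metis W_diag)
lemma W_pd: "x \<noteq> 0 \<Longrightarrow> qf W x > 0" using MW[of x] M_pd[of x] by simp
lemma qfW_nonneg: "qf W x \<ge> 0" using MW[of x] qfM_nonneg[of x] by simp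
lemma W_inv: "invertible W" using pd_invertible W_pd by blast
lemma W_Wi: "W ** Wi = mat 1" "Wi ** W = mat 1" using inv_props[OF W_inv] by (auto simp: Wi_def)
lemma Wi_sym: "transpose Wi = Wi" using sym_inv[OF W_sym W_inv] by (simp add: Wi_def)
lemma qfWi_nonneg: "qf Wi x \<ge> 0" using qf_inv_nonneg[OF W_Wi(1) qfW_nonneg] .

lemma G_sym: "transpose G = G"
  unfolding G_def by (simp add: transpose_add transpose_scaleR sym_mult3 K_sym Mi_sym M_sym)
lemma qfG: "qf G x = qf M x + \<alpha> * qf Mi (K *v x)"
  unfolding G_def qf_def by (simp add: mv_add mv_scale mv_mult inner_add_right sym_swap[OF K_sym, of x] inner_commute)
lemma G_pd: "x \<noteq> 0 \<Longrightarrow> qf G x > 0"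
  using qfG[of x] M_pd[of x] qfMi_nonneg[of "K *v x"] alpha by (simp add: add_pos_nonneg)
lemma G_inv: "invertible G" using pd_invertible G_pd by blast
lemma G_Gi: "G ** Gi = mat 1" "Gi ** G = mat 1" using inv_props[OF G_inv] by (auto simp: Gi_def)
lemma Gi_sym: "transpose Gi = Gi" using sym_inv[OF G_sym G_inv] by (simp add: Gi_def)
lemma qfG_nonneg: "qf G x \<ge> 0" using G_pd[of x] by (cases "x = 0") (auto simp: qf_def)
lemma qfGi_nonneg: "qf Gi x \<ge> 0" using qf_inv_nonneg[OF G_Gi(1) qfG_nonneg] .

lemma A_sym: "transpose A = A"
  unfolding A_def by (simp add: transpose_add transpose_diff sym_mult3 Gi_sym M_sym W_sym)
lemma qfA_nonneg: "qf A x \<ge> 0"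
proof -
  have "qf A x = qf Gi (M *v x) + qf W x - qf M x"
    unfolding A_def by (simp add: qf_def mv_add mv_diff inner_add_right inner_diff_right qf_mult_sym[OF M_sym, unfolded qf_def])
  thus ?thesis using qfGi_nonneg[of "M *v x"] MW[of x] by simp
qed

lemma B_sym: "transpose B = B"
  unfolding B_def by (simp add: transpose_scaleR sym_mult3 Wi_sym M_sym)
lemma D_sym: "transpose D = D"
  unfolding D_def by (simp add: transpose_diff B_sym M_sym)
lemma qfB: "qf B x = \<gamma> * qf Wi (M *v x)"
  unfolding B_def by (simp add: qf_def mv_scale qf_mult_sym[OF M_sym, unfolded qf_def])
lemma qfD: "qf D x = qf B x - qf M x"
  unfolding D_def by (simp add: qf_def mv_diff inner_diff_right)
lemma qfD_nonneg: "qf D z \<ge> 0"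
proof -
  define v where "v = Wi *v (M *v z)"
  define c where "c = 1 / \<gamma>"
  have Wv: "W *v v = M *v z" unfolding v_def by (simp add: matrix_vector_mul_assoc matrix_mul_assoc W_Wi)
  have "0 \<le> qf W (v - c *\<^sub>R z)" using qfW_nonneg .
  also have "\<dots> = qf W v - 2 * (v \<bullet> (W *v (c *\<^sub>R z))) + c^2 * qf W z"
    by (simp add: qf_diff[OF W_sym] qf_scale)
  also have "v \<bullet> (W *v (c *\<^sub>R z)) = c * qf M z"
    by (simp add: matrix_vector_mult_scaleR sym_swap[OF W_sym, of v] Wv qf_def)
  also have "qf W v = qf Wi (M *v z)"
    unfolding qf_def Wv by (simp add: v_def inner_commute)
  finally have h: "0 \<le> qf Wi (M *v z) - 2 * (c * qf M z) + c\<^sup>2 * qf W z" .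
  have "c\<^sup>2 * qf W z \<le> c\<^sup>2 * (\<gamma> * qf M z)" by (rule mult_left_mono[OF WM]) simp
  also have "\<dots> = c * qf M z" using gpos by (simp add: c_def power2_eq_square)
  finally have "0 \<le> qf Wi (M *v z) - c * qf M z" using h by linarith
  hence "0 \<le> \<gamma> * (qf Wi (M *v z) - c * qf M z)" using gpos by simp
  hence "0 \<le> \<gamma> * qf Wi (M *v z) - qf M z" using gpos by (simp add: c_def algebra_simps)
  thus ?thesis by (simp add: qfD qfB)
qed
lemma qfB_nonneg: "qf B x \<ge> 0" using qfD_nonneg[of x] qfM_nonneg[of x] by (simp add: qfD)

end



lemma qf_step:
  fixes P :: "real^'n^'n"
  assumes "transpose P = P"
  shows "qf P (y + t *\<^sub>R d) = qf P y + 2 * t * (d \<bullet> (P *v y)) + t^2 * qf P d"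
  using qf_add[OF assms, of y "t *\<^sub>R d"] sym_swap[OF assms, of y d]
  by (simp add: qf_scale matrix_vector_mult_scaleR)

context setting begin

definition "gp lt mt q = K *v (Mi *v (K *v q - M *v yd)) + (1/\<alpha>) *\<^sub>R (M *v (q - lt - mt)) + M *v yr"

lemma Fp_eq: "Fp K M yd yr \<alpha> lt mt q = 1/2 * qf Mi (K *v q - M *v yd) + 1/(2*\<alpha>) * qf M (q - lt - mt) + (M *v yr) \<bullet> q"
  by (simp add: Fp_def Mi_def)

lemma Fp_step: "Fp K M yd yr \<alpha> lt mt (q + t *\<^sub>R d) = Fp K M yd yr \<alpha> lt mt q + t * (d \<bullet> gp lt mt q)
   + t^2 * (1/2 * qf Mi (K *v d) + 1/(2*\<alpha>) * qf M d)"
proof -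
  have e1: "K *v (q + t *\<^sub>R d) - M *v yd = (K *v q - M *v yd) + t *\<^sub>R (K *v d)"
    by (simp add: matrix_vector_right_distrib matrix_vector_mult_scaleR)
  have e2: "q + t *\<^sub>R d - lt - mt = (q - lt - mt) + t *\<^sub>R d" by simp
  have e3: "(K *v d) \<bullet> (Mi *v (K *v q - M *v yd)) = d \<bullet> (K *v (Mi *v (K *v q - M *v yd)))"
    using sym_swap[OF K_sym, of d "Mi *v (K *v q - M *v yd)"] by (simp add: inner_commute)
  have lin: "d \<bullet> gp lt mt q = (K *v d) \<bullet> (Mi *v (K *v q - M *v yd)) + (1/\<alpha>) * (d \<bullet> (M *v (q - lt - mt))) + (M *v yr) \<bullet> d"
    unfolding gp_def by (simp add: inner_add_right e3 inner_commute)
  have lin2: "(M *v yr) \<bullet> (q + t *\<^sub>R d) = (M *v yr) \<bullet> q + t * ((M *v yr) \<bullet> d)"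
    by (simp add: inner_add_right)
  show ?thesis unfolding Fp_eq e1 e2 qf_step[OF Mi_sym] qf_step[OF M_sym] lin lin2
    using alpha by (simp add: field_simps)
qed

lemma p_stat:
  assumes "\<forall>q. Fp K M yd yr \<alpha> lt mt q0 \<le> Fp K M yd yr \<alpha> lt mt q"
  shows "gp lt mt q0 = 0"
proof -
  have "\<And>d. d \<bullet> gp lt mt q0 \<ge> 0"
  proof -
    fix d
    show "d \<bullet> gp lt mt q0 \<ge> 0"
    proof (rule vi_lemma[where \<phi>="\<lambda>t. Fp K M yd yr \<alpha> lt mt (q0 + t *\<^sub>R d)"
            and e="1/2 * qf Mi (K *v d) + 1/(2*\<alpha>) * qf M d"])
      fix t :: real
      show "Fp K M yd yr \<alpha> lt mt (q0 + 0 *\<^sub>R d) \<le> Fp K M yd yr \<alpha> lt mt (q0 + t *\<^sub>R d)"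
        using assms by simp
      show "Fp K M yd yr \<alpha> lt mt (q0 + t *\<^sub>R d) \<le> Fp K M yd yr \<alpha> lt mt (q0 + 0 *\<^sub>R d)
         + t * (d \<bullet> gp lt mt q0) + t^2 * (1/2 * qf Mi (K *v d) + 1/(2*\<alpha>) * qf M d)"
        unfolding Fp_step[of lt mt q0 t d] by simp
    qed
  qed
  from this[of "- gp lt mt q0"] have "gp lt mt q0 \<bullet> gp lt mt q0 \<le> 0" by simp
  moreover have "gp lt mt q0 \<bullet> gp lt mt q0 \<ge> 0" by simp
  ultimately have "gp lt mt q0 \<bullet> gp lt mt q0 = 0" by linarith
  thus ?thesis by simp
qed

lemma lam_vi:
  assumes "in_box \<beta> lam"
    and "\<forall>l. in_box \<beta> l \<longrightarrow>
              1/(2*\<alpha>) * qf M (lam - (ph - mt)) + 1/(2*\<alpha>) * qf (W - M) (lam - lt)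
              \<le> 1/(2*\<alpha>) * qf M (l - (ph - mt)) + 1/(2*\<alpha>) * qf (W - M) (l - lt)"
    and "in_box \<beta> l"
  shows "(l - lam) \<bullet> (M *v (lam - (ph - mt))) + (l - lam) \<bullet> ((W - M) *v (lam - lt)) \<ge> 0"
proof -
  define d where "d = l - lam"
  define \<phi> where "\<phi> t = 1/(2*\<alpha>) * qf M (lam - (ph - mt) + t *\<^sub>R d) + 1/(2*\<alpha>) * qf (W - M) (lam - lt + t *\<^sub>R d)" for t
  have WMs: "transpose (W - M) = W - M" by (simp add: transpose_diff W_sym M_sym)
  have e: "\<phi> t = \<phi> 0 + t * ((1/\<alpha>) * (d \<bullet> (M *v (lam - (ph - mt))) + d \<bullet> ((W - M) *v (lam - lt))))
        + t^2 * (1/(2*\<alpha>) * qf M d + 1/(2*\<alpha>) * qf (W - M) d)" for t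
    unfolding \<phi>_def qf_step[OF M_sym] qf_step[OF WMs] using alpha by (simp add: field_simps)
  have "(1/\<alpha>) * (d \<bullet> (M *v (lam - (ph - mt))) + d \<bullet> ((W - M) *v (lam - lt))) \<ge> 0"
  proof (rule vi_lemma[where \<phi>=\<phi>])
    fix t :: real assume t: "0 < t" "t \<le> 1"
    have ib: "in_box \<beta> (lam + t *\<^sub>R (l - lam))" using in_box_conv[OF assms(1) assms(3), of t] t by simp
    have v1: "lam - (ph - mt) + t *\<^sub>R d = (lam + t *\<^sub>R (l - lam)) - (ph - mt)"
      "lam - lt + t *\<^sub>R d = (lam + t *\<^sub>R (l - lam)) - lt" by (simp_all add: d_def algebra_simps)
    from assms(2)[rule_format, OF ib]
    show "\<phi> 0 \<le> \<phi> t" unfolding \<phi>_def v1 by simp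
  next
    fix t :: real assume t: "0 < t" "t \<le> 1"
    show "\<phi> t \<le> \<phi> 0 + t * ((1/\<alpha>) * (d \<bullet> (M *v (lam - (ph - mt))) + d \<bullet> ((W - M) *v (lam - lt))))
        + t^2 * (1/(2*\<alpha>) * qf M d + 1/(2*\<alpha>) * qf (W - M) d)" using e[of t] by linarith
  qed
  thus ?thesis using alpha by (simp add: d_def zero_le_divide_iff)
qed

lemma D_eq: "\<gamma> *\<^sub>R (M ** matrix_inv W ** M) - M = D"
  by (simp add: D_def B_def Wi_def)

lemma mu_vi:
  assumes "\<forall>m. dstar a b (M *v mu) + 1/(2*\<alpha>) * qf M (mu - (pk - lam))
                 + 1/(2*\<alpha>) * qf (\<gamma> *\<^sub>R (M ** matrix_inv W ** M) - M) (mu - mt)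
               \<le> dstar a b (M *v m) + 1/(2*\<alpha>) * qf M (m - (pk - lam))
                 + 1/(2*\<alpha>) * qf (\<gamma> *\<^sub>R (M ** matrix_inv W ** M) - M) (m - mt)"
  shows "dstar a b (M *v m) - dstar a b (M *v mu)
     + (1/\<alpha>) * ((m - mu) \<bullet> (M *v (mu - (pk - lam))) + (m - mu) \<bullet> (D *v (mu - mt))) \<ge> 0"
proof -
  define d where "d = m - mu"
  define c where "c = dstar a b (M *v m) - dstar a b (M *v mu)
     + (1/\<alpha>) * ((m - mu) \<bullet> (M *v (mu - (pk - lam))) + (m - mu) \<bullet> (D *v (mu - mt)))"
  define \<phi> where "\<phi> t = dstar a b (M *v (mu + t *\<^sub>R d)) + 1/(2*\<alpha>) * qf M (mu - (pk - lam) + t *\<^sub>R d) + 1/(2*\<alpha>) * qf D (mu - mt + t *\<^sub>R d)" for t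
  have e: "1/(2*\<alpha>) * qf M (mu - (pk - lam) + t *\<^sub>R d) + 1/(2*\<alpha>) * qf D (mu - mt + t *\<^sub>R d)
     = 1/(2*\<alpha>) * qf M (mu - (pk - lam)) + 1/(2*\<alpha>) * qf D (mu - mt)
      + t * ((1/\<alpha>) * (d \<bullet> (M *v (mu - (pk - lam))) + d \<bullet> (D *v (mu - mt))))
        + t^2 * (1/(2*\<alpha>) * qf M d + 1/(2*\<alpha>) * qf D d)" for t
    unfolding qf_step[OF M_sym] qf_step[OF D_sym] using alpha by (simp add: field_simps)
  have "c \<ge> 0"
  proof (rule vi_lemma[where \<phi>=\<phi>])
    fix t :: real assume t: "0 < t" "t \<le> 1"
    have v: "mu - (pk - lam) + t *\<^sub>R d = (mu + t *\<^sub>R d) - (pk - lam)" "mu - mt + t *\<^sub>R d = (mu + t *\<^sub>R d) - mt"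
      by (simp_all add: algebra_simps)
    from assms[rule_format, of "mu + t *\<^sub>R d"]
    show "\<phi> 0 \<le> \<phi> t" unfolding \<phi>_def D_eq v by simp
  next
    fix t :: real assume t: "0 < t" "t \<le> 1"
    have "M *v (mu + t *\<^sub>R d) = M *v mu + t *\<^sub>R (M *v m - M *v mu)"
      by (simp add: d_def matrix_vector_right_distrib matrix_vector_mult_scaleR matrix_vector_mult_diff_distrib)
    hence ds: "dstar a b (M *v (mu + t *\<^sub>R d)) \<le> dstar a b (M *v mu) + t * (dstar a b (M *v m) - dstar a b (M *v mu))"
      using dstar_conv[of t a b "M *v mu" "M *v m"] t by simp
    have p1: "\<phi> t = dstar a b (M *v (mu + t *\<^sub>R d)) + (1/(2*\<alpha>) * qf M (mu - (pk - lam)) + 1/(2*\<alpha>) * qf D (mu - mt)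
      + t * ((1/\<alpha>) * (d \<bullet> (M *v (mu - (pk - lam))) + d \<bullet> (D *v (mu - mt))))
        + t^2 * (1/(2*\<alpha>) * qf M d + 1/(2*\<alpha>) * qf D d))" unfolding \<phi>_def using e[of t] by linarith
    have p0: "\<phi> 0 = dstar a b (M *v mu) + (1/(2*\<alpha>) * qf M (mu - (pk - lam)) + 1/(2*\<alpha>) * qf D (mu - mt))"
      unfolding \<phi>_def by simp
    have tc: "t * c = t * (dstar a b (M *v m) - dstar a b (M *v mu)) + t * ((1/\<alpha>) * (d \<bullet> (M *v (mu - (pk - lam))) + d \<bullet> (D *v (mu - mt))))"
      unfolding c_def d_def by (simp add: distrib_left)
    show "\<phi> t \<le> \<phi> 0 + t * c + t^2 * (1/(2*\<alpha>) * qf M d + 1/(2*\<alpha>) * qf D d)"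
      using p1 p0 tc ds by linarith
  qed
  thus ?thesis by (simp add: c_def)
qed

end



lemma arith_comb:
  fixes i X1 Q1 al am aq QM Y S bl bm bq c w dD qA qD qM :: real
  assumes i: "i > 0"
    and E2: "X1 + i * (bq - aq) + Y = 0"
    and F3: "al - bl + c + w \<ge> 0"
    and F4: "S + i * (am + dD) \<ge> 0"
    and sq: "Q1 \<ge> 0" "QM + 2*(bl + bm - bq) + qM \<ge> 0" "qA \<ge> 0" "qD \<ge> 0"
  shows "X1 + Q1/2 + i*(al + am - aq) + i/2 * QM + Y + S \<ge> - (i/2) * (2*(c + w) + qA + 2*(dD + bm) + qD + qM)"
proof -
  have id: "X1 + Q1/2 + i*(al + am - aq) + i/2 * QM + Y + S + (i/2) * (2*(c + w) + qA + 2*(dD + bm) + qD + qM)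
     = Q1/2 + i/2 * ((QM + 2*(bl + bm - bq) + qM) + qA + qD) + (X1 + i * (bq - aq) + Y) + (S + i * (am + dD)) + i * (al - bl + c + w)"
    by (simp add: algebra_simps)
  have h1: "0 \<le> i/2 * ((QM + 2*(bl + bm - bq) + qM) + qA + qD)"
    using i sq by (intro mult_nonneg_nonneg) auto
  have h2: "0 \<le> i * (al - bl + c + w)" using i F3 by simp
  show ?thesis using id h1 h2 E2 F4 sq(1) by linarith
qed

lemma mv_neg: "(P::real^'n^'m) *v (- x) = - (P *v x)"
  by (simp add: matrix_vector_mult_def vec_eq_iff sum_negf)

context setting begin

lemma gp_lin: "d \<bullet> gp lt mt q = (K *v d) \<bullet> (Mi *v (K *v q - M *v yd)) + (1/\<alpha>) * (d \<bullet> (M *v (q - lt - mt))) + (M *v yr) \<bullet> d"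
proof -
  have e3: "(K *v d) \<bullet> (Mi *v (K *v q - M *v yd)) = d \<bullet> (K *v (Mi *v (K *v q - M *v yd)))"
    using sym_swap[OF K_sym, of d "Mi *v (K *v q - M *v yd)"] by (simp add: inner_commute)
  show ?thesis unfolding gp_def by (simp add: inner_add_right e3 inner_commute)
qed

lemma step_ineq:
  assumes ph_opt: "\<forall>q. Fp K M yd yr \<alpha> lt mt ph \<le> Fp K M yd yr \<alpha> lt mt q"
    and lam_box: "in_box \<beta> lam"
    and lam_opt: "\<forall>l. in_box \<beta> l \<longrightarrow>
              1/(2*\<alpha>) * qf M (lam - (ph - mt)) + 1/(2*\<alpha>) * qf (W - M) (lam - lt)
              \<le> 1/(2*\<alpha>) * qf M (l - (ph - mt)) + 1/(2*\<alpha>) * qf (W - M) (l - lt)"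
    and p_opt: "\<forall>q. Fp K M yd yr \<alpha> lam mt pk \<le> Fp K M yd yr \<alpha> lam mt q"
    and mu_opt: "\<forall>m. dstar a b (M *v mu) + 1/(2*\<alpha>) * qf M (mu - (pk - lam))
                 + 1/(2*\<alpha>) * qf (\<gamma> *\<^sub>R (M ** matrix_inv W ** M) - M) (mu - mt)
               \<le> dstar a b (M *v m) + 1/(2*\<alpha>) * qf M (m - (pk - lam))
                 + 1/(2*\<alpha>) * qf (\<gamma> *\<^sub>R (M ** matrix_inv W ** M) - M) (m - mt)"
    and l_box: "in_box \<beta> l"
  shows "PhiR l q m - PhiR lam pk mu \<ge> NS (l - lam) (m - mu) - NS (l - lt) (m - mt)"
proof -
  have g1: "gp lt mt ph = 0" by (rule p_stat[OF ph_opt])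
  have g2: "gp lam mt pk = 0" by (rule p_stat[OF p_opt])
  have "G *v (ph - pk) - M *v (lt - lam) = \<alpha> *\<^sub>R (gp lt mt ph - gp lam mt pk)"
    unfolding G_def gp_def using alpha by (simp add: mv_add mv_scale mv_mult algebra_simps)
  hence Grel: "G *v (ph - pk) = M *v (lt - lam)" using g1 g2 by simp
  have phpk: "ph - pk = Gi *v (M *v (lt - lam))"
    by (metis Grel G_Gi(2) matrix_vector_mul_assoc matrix_vector_mul_lid)
  define dl where "dl = l - lam"
  define dq where "dq = q - pk"
  define dm where "dm = m - mu"
  define el where "el = lam - lt"
  define em where "em = mu - mt"
  define r where "r = lam + mu - pk"
  define ep where "ep = ph - pk"
  define i where "i = 1 / \<alpha>"
  have ipos: "i > 0" using alpha by (simp add: i_def)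
  define X1 where "X1 = (K *v dq) \<bullet> (Mi *v (K *v pk - M *v yd))"
  define Q1 where "Q1 = qf Mi (K *v dq)"
  define al where "al = dl \<bullet> (M *v r)"
  define am where "am = dm \<bullet> (M *v r)"
  define aq where "aq = dq \<bullet> (M *v r)"
  define bl where "bl = dl \<bullet> (M *v em)"
  define bm where "bm = dm \<bullet> (M *v em)"
  define bq where "bq = dq \<bullet> (M *v em)"
  define QM where "QM = qf M (dl + dm - dq)"
  define Y where "Y = (M *v yr) \<bullet> dq"
  define S where "S = dstar a b (M *v m) - dstar a b (M *v mu)"
  define c where "c = dl \<bullet> ((M ** Gi ** M) *v el)"
  define w where "w = dl \<bullet> ((W - M) *v el)"
  define dD where "dD = dm \<bullet> (D *v em)"
  define qA where "qA = qf A el"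
  define qD where "qD = qf D em"
  define qM where "qM = qf M em"
  have cfact: "dl \<bullet> (M *v ep) = - c"
  proof -
    have "lt - lam = - el" by (simp add: el_def)
    thus ?thesis unfolding ep_def phpk c_def by (simp add: mv_mult mv_neg)
  qed
  have F3: "al - bl + c + w \<ge> 0"
  proof -
    have v: "lam - (ph - mt) = r - em - ep" by (simp add: r_def em_def ep_def algebra_simps)
    have "(l - lam) \<bullet> (M *v (lam - (ph - mt))) + (l - lam) \<bullet> ((W - M) *v (lam - lt)) \<ge> 0"
      by (rule lam_vi[OF lam_box lam_opt l_box])
    hence "dl \<bullet> (M *v r) - dl \<bullet> (M *v em) - dl \<bullet> (M *v ep) + w \<ge> 0"
      unfolding v dl_def[symmetric] el_def[symmetric] w_def
      by (simp add: matrix_vector_mult_diff_distrib inner_diff_right)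
    thus ?thesis using cfact by (simp add: al_def bl_def)
  qed
  have F4: "S + i * (am + dD) \<ge> 0"
  proof -
    have v: "mu - (pk - lam) = r" by (simp add: r_def algebra_simps)
    show ?thesis using mu_vi[OF mu_opt, of m]
      unfolding v dm_def[symmetric] em_def[symmetric] S_def am_def dD_def i_def by simp
  qed
  have E2: "X1 + i * (bq - aq) + Y = 0"
  proof -
    have v: "pk - lam - mt = em - r" by (simp add: r_def em_def algebra_simps)
    have "dq \<bullet> gp lam mt pk = 0" using g2 by simp
    thus ?thesis unfolding gp_lin v X1_def Y_def i_def bq_def aq_def
      by (simp add: matrix_vector_mult_diff_distrib inner_diff_right)
  qed
  have E1: "PhiR l q m - PhiR lam pk mu = X1 + Q1/2 + i*(al + am - aq) + i/2 * QM + Y + S"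
  proof -
    have v1: "K *v q - M *v yd = (K *v pk - M *v yd) + K *v dq"
      by (simp add: dq_def matrix_vector_mult_diff_distrib)
    have v2: "l + m - q = r + (dl + dm - dq)" by (simp add: r_def dl_def dm_def dq_def algebra_simps)
    have v3: "lam + mu - pk = r" by (simp add: r_def)
    have v4: "(M *v yr) \<bullet> q = (M *v yr) \<bullet> pk + Y" by (simp add: Y_def dq_def inner_diff_right)
    have x1: "(K *v pk - M *v yd) \<bullet> (Mi *v (K *v dq)) = X1"
      unfolding X1_def using sym_swap[OF Mi_sym, of "K *v pk - M *v yd" "K *v dq"] by (simp add: inner_commute)
    have x2: "r \<bullet> (M *v (dl + dm - dq)) = al + am - aq"
      unfolding al_def am_def aq_def using sym_swap[OF M_sym, of r "dl + dm - dq"]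
      by (simp add: inner_add_left inner_diff_left)
    show ?thesis unfolding PhiR_def v1 v2 v3 v4 qf_add[OF Mi_sym] qf_add[OF M_sym] x1 x2
      unfolding Q1_def[symmetric] QM_def[symmetric] S_def i_def using alpha by (simp add: field_simps)
  qed
  have NSd: "NS (l - lam) (m - mu) - NS (l - lt) (m - mt) = - (i/2) * (2*(c + w) + qA + 2*(dD + bm) + qD + qM)"
  proof -
    have v: "l - lt = dl + el" "m - mt = dm + em" by (simp_all add: dl_def el_def dm_def em_def)
    have Aeq: "A = M ** Gi ** M + (W - M)" by (simp add: A_def)
    have Beq: "B = D + M" by (simp add: D_def)
    have a1: "dl \<bullet> (A *v el) = c + w" unfolding Aeq c_def w_def by (simp add: mv_add inner_add_right)
    have b1: "dm \<bullet> (B *v em) = dD + bm" unfolding Beq dD_def bm_def by (simp add: mv_add inner_add_right)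
    have b2: "qf B em = qD + qM" using qfD[of em] by (simp add: qD_def qM_def)
    show ?thesis unfolding NS_def v dl_def[symmetric] dm_def[symmetric] qf_add[OF A_sym] qf_add[OF B_sym] a1 b1 b2
      unfolding qA_def[symmetric] i_def using alpha by (simp add: field_simps)
  qed
  have sqM: "QM + 2*(bl + bm - bq) + qM \<ge> 0"
  proof -
    have "qf M ((dl + dm - dq) + em) \<ge> 0" by (rule qfM_nonneg)
    moreover have "(dl + dm - dq) \<bullet> (M *v em) = bl + bm - bq"
      by (simp add: bl_def bm_def bq_def inner_add_left inner_diff_left)
    ultimately show ?thesis unfolding qf_add[OF M_sym] QM_def qM_def by simp
  qed
  have "X1 + Q1/2 + i*(al + am - aq) + i/2 * QM + Y + S \<ge> - (i/2) * (2*(c + w) + qA + 2*(dD + bm) + qD + qM)"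
    by (rule arith_comb[OF ipos E2 F3 F4 _ sqM])
       (simp_all add: Q1_def qA_def qD_def qfMi_nonneg qfA_nonneg qfD_nonneg)
  thus ?thesis using E1 NSd by linarith
qed

end



lemma qf_comb:
  fixes Q :: "real^'n^'n" and T :: real
  shows "(T^2 - T) * (qf Q (x - a) - qf Q (x - b)) + T * (qf Q (y - a) - qf Q (y - b))
     = qf Q ((T - 1) *\<^sub>R x + y - T *\<^sub>R a) - qf Q ((T - 1) *\<^sub>R x + y - T *\<^sub>R b)"
  unfolding qf_def
  by (simp add: matrix_vector_right_distrib matrix_vector_mult_diff_distrib matrix_vector_mult_scaleR
       inner_add_left inner_add_right inner_diff_left inner_diff_right algebra_simps power2_eq_square)

lemma pd_lower:
  fixes P :: "real^'n^'n"
  assumes "\<And>x. x \<noteq> 0 \<Longrightarrow> qf P x > 0"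
  shows "\<exists>c>0. \<forall>x. c * (norm x)^2 \<le> qf P x"
proof -
  have cont: "continuous_on (sphere 0 1) (\<lambda>x. qf P x)" unfolding qf_def by (intro continuous_intros)
  obtain x0 where x0: "x0 \<in> sphere (0::real^'n) 1" "\<forall>y\<in>sphere 0 1. qf P x0 \<le> qf P y"
    using continuous_attains_inf[OF compact_sphere _ cont] by auto
  have "x0 \<noteq> 0" using x0 by auto
  hence c: "qf P x0 > 0" using assms by blast
  have "\<forall>x. qf P x0 * (norm x)^2 \<le> qf P x"
  proof
    fix x :: "real^'n"
    show "qf P x0 * (norm x)^2 \<le> qf P x"
    proof (cases "x = 0")
      case True thus ?thesis by (simp add: qf_def)
    next
      case False
      hence "(1 / norm x) *\<^sub>R x \<in> sphere 0 1" by simp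
      hence "qf P x0 \<le> qf P ((1 / norm x) *\<^sub>R x)" using x0 by blast
      also have "\<dots> = qf P x / (norm x)^2" by (simp add: qf_scale power_divide)
      finally show ?thesis using False by (simp add: field_simps)
    qed
  qed
  thus ?thesis using c by blast
qed

lemma quad_bound:
  fixes c B C r :: real
  assumes "c > 0" "r \<ge> 0" "c * r^2 - B * r \<le> C"
  shows "r \<le> max 1 ((\<bar>B\<bar> + \<bar>C\<bar>) / c)"
proof (rule ccontr)
  assume "\<not> ?thesis"
  hence r1: "r > 1" and r2: "r > (\<bar>B\<bar> + \<bar>C\<bar>) / c" by auto
  have "c * r > \<bar>B\<bar> + \<bar>C\<bar>" using r2 assms(1) by (simp add: field_simps)
  hence "c * r * r > (\<bar>B\<bar> + \<bar>C\<bar>) * r" using r1 by (intro mult_strict_right_mono) auto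
  moreover have "(\<bar>B\<bar> + \<bar>C\<bar>) * r \<ge> \<bar>B\<bar> * r + \<bar>C\<bar>"
  proof -
    have "\<bar>C\<bar> * 1 \<le> \<bar>C\<bar> * r" by (rule mult_left_mono) (use r1 in auto)
    thus ?thesis by (simp add: algebra_simps)
  qed
  moreover have "\<bar>B\<bar> * r \<ge> B * r" using r1 by (intro mult_right_mono) auto
  ultimately have "c * r^2 > B * r + C" by (simp add: power2_eq_square)
  thus False using assms(3) by linarith
qed




lemma fista_arith:
  fixes T a P0 P1 Ps N0 N1 :: real
  assumes "T^2 = a + T" "a * (P0 - P1) + T * (Ps - P1) \<ge> N1 - N0"
  shows "T^2 * (P1 - Ps) + N1 \<le> a * (P0 - Ps) + N0"
proof -
  have "T^2 * (P1 - Ps) = a * (P1 - Ps) + T * (P1 - Ps)" using assms(1) by (simp add: algebra_simps)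
  moreover have "a * (P0 - Ps) = a * (P0 - P1) + a * (P1 - Ps)" by (simp add: algebra_simps)
  moreover have "T * (Ps - P1) = - (T * (P1 - Ps))" by (simp add: algebra_simps)
  ultimately show ?thesis using assms(2) by linarith
qed

context setting begin

lemma Phi_eq: "in_box \<beta> l \<Longrightarrow> Phi_h K M yd yr \<alpha> \<beta> a b l p m = ereal (PhiR l p m)"
  by (simp add: Phi_h_def PhiR_def Mi_def)

lemma NS_nonneg: "NS l m \<ge> 0"
  using qfA_nonneg[of l] qfB_nonneg[of m] alpha by (simp add: NS_def)

lemma NS_neg: "NS (-l) (-m) = NS l m" by (simp add: NS_def qf_neg)

lemma NS_comb:
  "(T^2 - T) * (NS (x - u) (x' - u') - NS (x - v) (x' - v')) + T * (NS (y - u) (y' - u') - NS (y - v) (y' - v'))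
   = NS ((T - 1) *\<^sub>R x + y - T *\<^sub>R u) ((T - 1) *\<^sub>R x' + y' - T *\<^sub>R u')
     - NS ((T - 1) *\<^sub>R x + y - T *\<^sub>R v) ((T - 1) *\<^sub>R x' + y' - T *\<^sub>R v')"
proof -
  note h1 = qf_comb[of T A x u v y]
  note h2 = qf_comb[of T B x' u' v' y']
  have "(T^2 - T) * (NS (x - u) (x' - u') - NS (x - v) (x' - v')) + T * (NS (y - u) (y' - u') - NS (y - v) (y' - v'))
     = 1/(2*\<alpha>) * (((T^2 - T) * (qf A (x - u) - qf A (x - v)) + T * (qf A (y - u) - qf A (y - v)))
         + ((T^2 - T) * (qf B (x' - u') - qf B (x' - v')) + T * (qf B (y' - u') - qf B (y' - v'))))"
    unfolding NS_def using alpha by (simp add: field_simps)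
  also have "\<dots> = 1/(2*\<alpha>) * ((qf A ((T - 1) *\<^sub>R x + y - T *\<^sub>R u) - qf A ((T - 1) *\<^sub>R x + y - T *\<^sub>R v))
      + (qf B ((T - 1) *\<^sub>R x' + y' - T *\<^sub>R u') - qf B ((T - 1) *\<^sub>R x' + y' - T *\<^sub>R v')))"
    unfolding h1 h2 ..
  also have "\<dots> = NS ((T - 1) *\<^sub>R x + y - T *\<^sub>R u) ((T - 1) *\<^sub>R x' + y' - T *\<^sub>R u')
     - NS ((T - 1) *\<^sub>R x + y - T *\<^sub>R v) ((T - 1) *\<^sub>R x' + y' - T *\<^sub>R v')"
    unfolding NS_def using alpha by (simp add: field_simps)
  finally show ?thesis .
qed

end



context setting begin

lemma t_props:
  fixes t :: "nat \<Rightarrow> real"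
  assumes t1: "t 1 = 1" and tr: "\<And>k. k \<ge> 1 \<Longrightarrow> t (k+1) = (1 + sqrt (1 + 4 * (t k)\<^sup>2)) / 2"
  shows "k \<ge> 1 \<Longrightarrow> t k \<ge> (real k + 1) / 2 \<and> t k \<ge> 1"
proof (induction k rule: dec_induct)
  case base thus ?case using t1 by simp
next
  case (step n)
  have "sqrt (4 * (t n)^2) \<le> sqrt (1 + 4 * (t n)\<^sup>2)" by simp
  moreover have "sqrt (4 * (t n)^2) = 2 * t n" using step.IH by (simp add: real_sqrt_mult)
  ultimately have "t (Suc n) \<ge> t n + 1/2" using tr[of n] step.hyps by simp
  thus ?case using step.IH by simp
qed

lemma t_rec:
  fixes t :: "nat \<Rightarrow> real"
  assumes "t (k+1) = (1 + sqrt (1 + 4 * (t k)\<^sup>2)) / 2"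
  shows "(t (k+1))^2 = (t k)^2 + t (k+1)"
proof -
  define s where "s = sqrt (1 + 4 * (t k)\<^sup>2)"
  have s2: "s^2 = 1 + 4 * (t k)\<^sup>2" unfolding s_def by simp
  have "t (k+1) = (1 + s) / 2" using assms by (simp add: s_def)
  hence "s = 2 * t (k+1) - 1" by simp
  hence h: "(2 * t (k+1) - 1)^2 = 1 + 4 * (t k)\<^sup>2" using s2 by simp
  have "t (k+1) * t (k+1) * 4 - t (k+1) * 4 = t k * t k * 4" using h by (simp add: power2_eq_square algebra_simps)
  thus ?thesis by (simp add: power2_eq_square)
qed

lemma Mi_pd: "x \<noteq> 0 \<Longrightarrow> qf Mi x > 0"
proof -
  assume x: "x \<noteq> 0"
  have e: "M *v (Mi *v x) = x" by (simp add: matrix_vector_mul_assoc M_Mi)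
  hence "Mi *v x \<noteq> 0" using x by auto
  hence "qf M (Mi *v x) > 0" by (rule M_pd)
  moreover have "qf Mi x = qf M (Mi *v x)" unfolding qf_def
    by (subst (1) e[symmetric]) (simp add: inner_commute)
  ultimately show ?thesis by simp
qed

lemma level_bounded:
  "\<exists>R. \<forall>l q m. in_box \<beta> l \<longrightarrow> PhiR l q m \<le> C \<longrightarrow> norm l \<le> R \<and> norm q \<le> R \<and> norm m \<le> R"
proof -
  obtain c1 where c1: "c1 > 0" "\<And>x. c1 * (norm x)^2 \<le> qf Mi x" using pd_lower[OF Mi_pd] by blast
  obtain cK where cK: "cK > 0" "\<And>x. cK * (norm x)^2 \<le> qf K x" using pd_lower[OF K_pd] by blast
  obtain cM where cM: "cM > 0" "\<And>x. cM * (norm x)^2 \<le> qf M x" using pd_lower[OF M_pd] by blast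
  define Rl where "Rl = real CARD('n) * \<beta>"
  have Rl: "norm l \<le> Rl" if "in_box \<beta> l" for l :: "real^'n"
  proof -
    have "norm l \<le> (\<Sum>i\<in>UNIV. \<bar>l $ i\<bar>)" by (rule norm_le_l1_cart)
    also have "\<dots> \<le> (\<Sum>i\<in>(UNIV::'n set). \<beta>)"
    proof (rule sum_mono)
      fix i
      have "- \<beta> \<le> l$i \<and> l$i \<le> \<beta>" using that unfolding in_box_def by blast
      thus "\<bar>l $ i\<bar> \<le> \<beta>" by linarith
    qed
    finally show ?thesis by (simp add: Rl_def)
  qed
  have Kn: "cK * norm x \<le> norm (K *v x)" for x
  proof (cases "x = 0")
    case True thus ?thesis by simp
  next
    case False
    have "cK * (norm x)^2 \<le> x \<bullet> (K *v x)" using cK(2)[of x] by (simp add: qf_def)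
    also have "\<dots> \<le> norm x * norm (K *v x)" by (rule norm_cauchy_schwarz)
    finally have "norm x * (cK * norm x) \<le> norm x * norm (K *v x)" by (simp add: power2_eq_square algebra_simps)
    thus ?thesis using False by simp
  qed
  define \<beta>1 where "\<beta>1 = norm (K *v (Mi *v (M *v yd)))"
  define \<beta>2 where "\<beta>2 = norm (M *v yr)"
  define cc where "cc = c1 * cK^2 / 2"
  have ccpos: "cc > 0" using c1 cK by (simp add: cc_def)
  define C2 where "C2 = C + 1/2 * qf M yd"
  define Rq where "Rq = max 1 ((\<bar>2 * \<beta>1 / 2 + \<beta>2\<bar> + \<bar>C2\<bar>) / cc)"
  define C3 where "C3 = 2 * \<alpha> * (C2 + \<beta>2 * Rq)"
  define R3 where "R3 = max 1 ((\<bar>0::real\<bar> + \<bar>C3\<bar>) / cM)"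
  have main: "norm q \<le> Rq \<and> norm m \<le> R3 + Rl + Rq" if lb: "in_box \<beta> l" and le: "PhiR l q m \<le> C" for l q m
  proof -
    have q1: "c1 * (norm (K *v q))^2 \<le> qf Mi (K *v q)" by (rule c1(2))
    have "(cK * norm q)^2 \<le> (norm (K *v q))^2" using Kn[of q] cK by (intro power_mono) auto
    hence "c1 * (cK * norm q)^2 \<le> c1 * (norm (K *v q))^2" using c1 by simp
    hence q2: "2 * cc * (norm q)^2 \<le> qf Mi (K *v q)" using q1 by (simp add: cc_def power_mult_distrib)
    have x1: "(K *v q) \<bullet> (Mi *v (M *v yd)) = q \<bullet> (K *v (Mi *v (M *v yd)))"
      using sym_swap[OF K_sym, of q "Mi *v (M *v yd)"] by (simp add: inner_commute)
    have x2: "q \<bullet> (K *v (Mi *v (M *v yd))) \<le> norm q * \<beta>1" unfolding \<beta>1_def by (rule norm_cauchy_schwarz)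
    have x3: "(M *v yr) \<bullet> q \<ge> - (\<beta>2 * norm q)"
      using norm_cauchy_schwarz[of "- (M *v yr)" q] unfolding \<beta>2_def by simp
    have qfe: "qf Mi (K *v q - M *v yd) = qf Mi (K *v q) - 2 * ((K *v q) \<bullet> (Mi *v (M *v yd))) + qf Mi (M *v yd)"
      by (rule qf_diff[OF Mi_sym])
    have lowMi: "qf Mi (K *v q - M *v yd) \<ge> 2 * cc * (norm q)^2 - 2 * (norm q * \<beta>1)"
      using qfe x1 x2 q2 qfMi_nonneg[of "M *v yd"] by linarith
    have d0: "dstar a b (M *v m) \<ge> 0" by (rule dstar_nonneg[OF a0 b0])
    have m0: "qf M (l + m - q) \<ge> 0" by (rule qfM_nonneg)
    have ia: "1/(2*\<alpha>) * qf M (l + m - q) \<ge> 0" using m0 alpha by simp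
    have "cc * (norm q)^2 - (2 * \<beta>1 / 2 + \<beta>2) * norm q \<le> C2"
      using le lowMi x3 d0 ia unfolding PhiR_def C2_def by (simp add: algebra_simps)
    hence nq: "norm q \<le> Rq" unfolding Rq_def by (rule quad_bound[OF ccpos norm_ge_zero])
    have "1/(2*\<alpha>) * qf M (l + m - q) \<le> C2 + \<beta>2 * norm q"
      using le x3 d0 qfMi_nonneg[of "K *v q - M *v yd"] unfolding PhiR_def C2_def
      by (simp add: algebra_simps)
    also have "\<dots> \<le> C2 + \<beta>2 * Rq" using nq by (simp add: \<beta>2_def mult_left_mono)
    finally have "qf M (l + m - q) \<le> C3" using alpha by (simp add: C3_def field_simps)
    hence "cM * (norm (l + m - q))^2 - 0 * norm (l + m - q) \<le> C3" using cM(2)[of "l + m - q"] by simp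
    hence n3: "norm (l + m - q) \<le> R3" unfolding R3_def by (rule quad_bound[OF cM(1) norm_ge_zero])
    have "norm m = norm ((l + m - q) - l + q)" by simp
    moreover have "norm ((l + m - q) - l + q) \<le> norm ((l + m - q) - l) + norm q" by (rule norm_triangle_ineq)
    moreover have "norm ((l + m - q) - l) \<le> norm (l + m - q) + norm l" by (rule norm_triangle_ineq4)
    ultimately have "norm m \<le> norm (l + m - q) + norm l + norm q" by linarith
    thus ?thesis using n3 nq Rl[OF lb] by linarith
  qed
  have "Rl \<ge> 0" using beta by (simp add: Rl_def)
  moreover have "R3 \<ge> 0" by (simp add: R3_def)
  ultimately have "\<forall>l q m. in_box \<beta> l \<longrightarrow> PhiR l q m \<le> C \<longrightarrow> norm l \<le> max Rl (R3 + Rl + Rq) \<and> norm q \<le> max Rl (R3 + Rl + Rq) \<and> norm m \<le> max Rl (R3 + Rl + Rq)"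
    using main Rl by (smt (verit))
  thus ?thesis by blast
qed

end



context setting begin

lemma tau_eq: "tau_h K M W \<gamma> \<alpha> l0 m0 ls ms = NS (l0 - ls) (m0 - ms)"
  by (simp add: tau_h_def NS_def A_def B_def G_def Gi_def Mi_def Wi_def Let_def)

lemma rate_arith:
  fixes tk X tau K1 :: real
  assumes "tk^2 * X \<le> tau" "tk \<ge> K1 / 2" "K1 > 0" "tau \<ge> 0"
  shows "X \<le> 4 * tau / K1^2"
proof (cases "X \<le> 0")
  case True
  have "0 \<le> 4 * tau / K1^2" using assms by simp
  thus ?thesis using True by linarith
next
  case False
  have "(K1/2)^2 \<le> tk^2" using assms by (intro power_mono) auto
  hence "(K1/2)^2 * X \<le> tk^2 * X" using False by (intro mult_right_mono) auto
  hence "(K1/2)^2 * X \<le> tau" using assms(1) by linarith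
  hence "K1^2 * X \<le> 4 * tau" by (simp add: power_divide field_simps)
  thus ?thesis using assms(3) by (simp add: field_simps)
qed

lemma main:
  fixes lam p mu :: "nat \<Rightarrow> real^'n" and ls ps ms :: "real^'n"
  assumes opt: "\<And>l q m. Phi_h K M yd yr \<alpha> \<beta> a b ls ps ms \<le> Phi_h K M yd yr \<alpha> \<beta> a b l q m"
    and init: "in_box \<beta> (lam 0)"
    and alg: "sgs_mabcd K M W \<gamma> yd yr \<alpha> \<beta> a b lam p mu"
  shows "(\<forall>k\<ge>1. Phi_h K M yd yr \<alpha> \<beta> a b (lam k) (p k) (mu k) - Phi_h K M yd yr \<alpha> \<beta> a b ls ps ms
              \<le> ereal (4 * NS (lam 0 - ls) (mu 0 - ms) / (real k + 1)\<^sup>2))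
         \<and> bounded (range (\<lambda>k. (lam k, p k, mu k)))"
proof -
  obtain lt pt mt ph and t :: "nat \<Rightarrow> real" where
    h1: "lt 1 = lam 0" and h2: "mt 1 = mu 0" and h3: "t 1 = 1" and
    H: "\<forall>k\<ge>1.
          (\<forall>q. Fp K M yd yr \<alpha> (lt k) (mt k) (ph k) \<le> Fp K M yd yr \<alpha> (lt k) (mt k) q) \<and>
          in_box \<beta> (lam k) \<and>
          (\<forall>l. in_box \<beta> l \<longrightarrow>
              1/(2*\<alpha>) * qf M (lam k - (ph k - mt k)) + 1/(2*\<alpha>) * qf (W - M) (lam k - lt k)
              \<le> 1/(2*\<alpha>) * qf M (l - (ph k - mt k)) + 1/(2*\<alpha>) * qf (W - M) (l - lt k)) \<and>
          (\<forall>q. Fp K M yd yr \<alpha> (lam k) (mt k) (p k) \<le> Fp K M yd yr \<alpha> (lam k) (mt k) q) \<and>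
          (\<forall>m. dstar a b (M *v mu k) + 1/(2*\<alpha>) * qf M (mu k - (p k - lam k))
                 + 1/(2*\<alpha>) * qf (\<gamma> *\<^sub>R (M ** matrix_inv W ** M) - M) (mu k - mt k)
               \<le> dstar a b (M *v m) + 1/(2*\<alpha>) * qf M (m - (p k - lam k))
                 + 1/(2*\<alpha>) * qf (\<gamma> *\<^sub>R (M ** matrix_inv W ** M) - M) (m - mt k)) \<and>
          t (k+1) = (1 + sqrt (1 + 4 * (t k)\<^sup>2)) / 2 \<and>
          lt (k+1) = lam k + ((t k - 1) / t (k+1)) *\<^sub>R (lam k - lam (k-1)) \<and>
          pt (k+1) = p k + ((t k - 1) / t (k+1)) *\<^sub>R (p k - p (k-1)) \<and>
          mt (k+1) = mu k + ((t k - 1) / t (k+1)) *\<^sub>R (mu k - mu (k-1))"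
    using alg unfolding sgs_mabcd_def by blast
  have stp: "NS (l - lam k) (m - mu k) - NS (l - lt k) (m - mt k) \<le> PhiR l q m - PhiR (lam k) (p k) (mu k)"
    if k: "k \<ge> 1" and lb: "in_box \<beta> l" for k l q m
  proof -
    note c = H[rule_format, OF k]
    show ?thesis
      by (rule step_ineq[OF _ _ _ _ _ lb]) (use c in blast)+
  qed
  have box: "in_box \<beta> (lam k)" for k
    using init H by (cases "k = 0") auto
  have lsbox: "in_box \<beta> ls"
  proof (rule ccontr)
    assume "\<not> in_box \<beta> ls"
    hence "Phi_h K M yd yr \<alpha> \<beta> a b ls ps ms = \<infinity>" by (simp add: Phi_h_def)
    moreover have "Phi_h K M yd yr \<alpha> \<beta> a b (lam 0) 0 0 = ereal (PhiR (lam 0) 0 0)" by (rule Phi_eq[OF init])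
    ultimately show False using opt[of "lam 0" 0 0] by simp
  qed
  have optR: "PhiR ls ps ms \<le> PhiR l q m" if "in_box \<beta> l" for l q m
    using opt[of l q m] Phi_eq[OF that] Phi_eq[OF lsbox] by simp
  have tr: "t (k+1) = (1 + sqrt (1 + 4 * (t k)\<^sup>2)) / 2" if "k \<ge> 1" for k using H that by blast
  have tp: "t k \<ge> (real k + 1) / 2 \<and> t k \<ge> 1" if "k \<ge> 1" for k
    by (rule t_props[OF h3 tr that])
  have ltr: "lt (k+1) = lam k + ((t k - 1) / t (k+1)) *\<^sub>R (lam k - lam (k-1))" if "k \<ge> 1" for k
    using H that by blast
  have mtr: "mt (k+1) = mu k + ((t k - 1) / t (k+1)) *\<^sub>R (mu k - mu (k-1))" if "k \<ge> 1" for k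
    using H that by blast
  define \<Phi> where "\<Phi> k = PhiR (lam k) (p k) (mu k)" for k
  define \<Phi>s where "\<Phi>s = PhiR ls ps ms"
  define \<tau> where "\<tau> = NS (lam 0 - ls) (mu 0 - ms)"
  define ul where "ul k = lam (k-1) + t k *\<^sub>R (lam k - lam (k-1))" for k
  define um where "um k = mu (k-1) + t k *\<^sub>R (mu k - mu (k-1))" for k
  define E where "E k = (t k)^2 * (\<Phi> k - \<Phi>s) + NS (ls - ul k) (ms - um k)" for k
  have tau': "\<tau> = NS (ls - lam 0) (ms - mu 0)"
    using NS_neg[of "ls - lam 0" "ms - mu 0"] by (simp add: \<tau>_def)
  have Eb: "E k \<le> \<tau>" if "k \<ge> 1" for k
    using that
  proof (induction k rule: dec_induct)
    case base
    have "NS (ls - lam 1) (ms - mu 1) - NS (ls - lt 1) (ms - mt 1) \<le> PhiR ls ps ms - PhiR (lam 1) (p 1) (mu 1)"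
      by (rule stp[OF _ lsbox]) simp
    thus ?case unfolding E_def ul_def um_def tau' h1 h2 h3 \<Phi>_def \<Phi>s_def by simp
  next
    case (step n)
    define T where "T = t (Suc n)"
    have T1: "T \<ge> 1" using tp[of "Suc n"] by (simp add: T_def)
    have TT: "T^2 = (t n)^2 + T" using t_rec[OF tr[OF step.hyps(1)]] by (simp add: T_def)
    have I1: "NS (lam n - lam (Suc n)) (mu n - mu (Suc n)) - NS (lam n - lt (Suc n)) (mu n - mt (Suc n))
        \<le> \<Phi> n - \<Phi> (Suc n)"
      using stp[where k="Suc n" and l="lam n" and q="p n" and m="mu n"] box[of n] by (simp add: \<Phi>_def)
    have I2: "NS (ls - lam (Suc n)) (ms - mu (Suc n)) - NS (ls - lt (Suc n)) (ms - mt (Suc n))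
        \<le> \<Phi>s - \<Phi> (Suc n)"
      using stp[where k="Suc n" and l=ls and q=ps and m=ms] lsbox by (simp add: \<Phi>_def \<Phi>s_def)
    have J1: "(t n)^2 * (NS (lam n - lam (Suc n)) (mu n - mu (Suc n)) - NS (lam n - lt (Suc n)) (mu n - mt (Suc n)))
        \<le> (t n)^2 * (\<Phi> n - \<Phi> (Suc n))" by (rule mult_left_mono[OF I1]) simp
    have J2: "T * (NS (ls - lam (Suc n)) (ms - mu (Suc n)) - NS (ls - lt (Suc n)) (ms - mt (Suc n)))
        \<le> T * (\<Phi>s - \<Phi> (Suc n))" by (rule mult_left_mono[OF I2]) (use T1 in simp)
    note cmb = NS_comb[where T=T and x="lam n" and u="lam (Suc n)" and x'="mu n" and u'="mu (Suc n)"
        and v="lt (Suc n)" and v'="mt (Suc n)" and y=ls and y'=ms]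
    have ltn: "lt (Suc n) = lam n + ((t n - 1) / T) *\<^sub>R (lam n - lam (n-1))"
      using ltr[OF step.hyps(1)] by (simp add: T_def)
    have mtn: "mt (Suc n) = mu n + ((t n - 1) / T) *\<^sub>R (mu n - mu (n-1))"
      using mtr[OF step.hyps(1)] by (simp add: T_def)
    have sc: "T *\<^sub>R (((t n - 1) / T) *\<^sub>R w) = (t n - 1) *\<^sub>R w" for w :: "real^'n"
      using T1 by simp
    have v1: "(T - 1) *\<^sub>R lam n + ls - T *\<^sub>R lam (Suc n) = ls - ul (Suc n)"
      "(T - 1) *\<^sub>R mu n + ms - T *\<^sub>R mu (Suc n) = ms - um (Suc n)"
      by (simp_all add: ul_def um_def T_def algebra_simps)
    have v2: "(T - 1) *\<^sub>R lam n + ls - T *\<^sub>R lt (Suc n) = ls - ul n"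
      "(T - 1) *\<^sub>R mu n + ms - T *\<^sub>R mt (Suc n) = ms - um n"
      unfolding ltn mtn ul_def um_def scaleR_add_right sc by (simp_all add: algebra_simps)
    have TT2: "T^2 - T = (t n)^2" using TT by simp
    have comb: "(t n)^2 * (\<Phi> n - \<Phi> (Suc n)) + T * (\<Phi>s - \<Phi> (Suc n))
       \<ge> NS (ls - ul (Suc n)) (ms - um (Suc n)) - NS (ls - ul n) (ms - um n)"
      using J1 J2 cmb unfolding v1 v2 TT2 by linarith
    have "E (Suc n) \<le> E n"
      using fista_arith[OF TT comb] unfolding E_def T_def by simp
    thus ?case using step.IH by linarith
  qed
  have tau0: "\<tau> \<ge> 0" by (simp add: \<tau>_def NS_nonneg)
  have key: "(t k)^2 * (\<Phi> k - \<Phi>s) \<le> \<tau>" if "k \<ge> 1" for k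
    using Eb[OF that] NS_nonneg[of "ls - ul k" "ms - um k"] unfolding E_def by linarith
  have rate: "\<Phi> k - \<Phi>s \<le> 4 * \<tau> / (real k + 1)^2" if "k \<ge> 1" for k
    by (rule rate_arith[OF key[OF that]]) (use tp[OF that] tau0 in auto)
  have lev: "\<Phi> k \<le> \<Phi>s + \<tau>" if "k \<ge> 1" for k
  proof (cases "\<Phi> k - \<Phi>s \<le> 0")
    case True thus ?thesis using tau0 by linarith
  next
    case False
    have "1 \<le> (t k)^2" using tp[OF that] by simp
    hence "1 * (\<Phi> k - \<Phi>s) \<le> (t k)^2 * (\<Phi> k - \<Phi>s)" using False by (intro mult_right_mono) auto
    hence "\<Phi> k - \<Phi>s \<le> (t k)^2 * (\<Phi> k - \<Phi>s)" by simp
    thus ?thesis using key[OF that] by linarith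
  qed
  obtain R where R: "\<forall>l q m. in_box \<beta> l \<longrightarrow> PhiR l q m \<le> \<Phi>s + \<tau> \<longrightarrow> norm l \<le> R \<and> norm q \<le> R \<and> norm m \<le> R"
    using level_bounded by blast
  have nb: "norm (lam k) \<le> R \<and> norm (p k) \<le> R \<and> norm (mu k) \<le> R" if "k \<ge> 1" for k
    using R box[of k] lev[OF that] unfolding \<Phi>_def by blast
  have sub: "range (\<lambda>k. (lam k, p k, mu k)) \<subseteq>
      insert (lam 0) (cball 0 R) \<times> (insert (p 0) (cball 0 R) \<times> insert (mu 0) (cball 0 R))"
  proof
    fix z assume "z \<in> range (\<lambda>k. (lam k, p k, mu k))"
    then obtain k where z: "z = (lam k, p k, mu k)" by blast
    show "z \<in> insert (lam 0) (cball 0 R) \<times> (insert (p 0) (cball 0 R) \<times> insert (mu 0) (cball 0 R))"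
    proof (cases "k = 0")
      case True thus ?thesis using z by simp
    next
      case False
      hence "k \<ge> 1" by simp
      thus ?thesis using z nb[of k] by (simp add: dist_norm)
    qed
  qed
  have bnd: "bounded (range (\<lambda>k. (lam k, p k, mu k)))"
    by (rule bounded_subset[OF _ sub]) (intro bounded_Times; simp)
  have "\<forall>k\<ge>1. Phi_h K M yd yr \<alpha> \<beta> a b (lam k) (p k) (mu k) - Phi_h K M yd yr \<alpha> \<beta> a b ls ps ms
              \<le> ereal (4 * NS (lam 0 - ls) (mu 0 - ms) / (real k + 1)\<^sup>2)"
  proof (intro allI impI)
    fix k :: nat assume k: "k \<ge> 1"
    show "Phi_h K M yd yr \<alpha> \<beta> a b (lam k) (p k) (mu k) - Phi_h K M yd yr \<alpha> \<beta> a b ls ps ms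
              \<le> ereal (4 * NS (lam 0 - ls) (mu 0 - ms) / (real k + 1)\<^sup>2)"
      unfolding Phi_eq[OF box[of k]] Phi_eq[OF lsbox]
      using rate[OF k] by (simp add: \<Phi>_def \<Phi>s_def \<tau>_def)
  qed
  thus ?thesis using bnd by blast
qed

end

theorem theorem3:
  fixes K M W :: "real^'n^'n" and yd yr :: "real^'n"
    and \<alpha> \<beta> a b \<gamma> :: real
    and lam p mu :: "nat \<Rightarrow> real^'n"
    and ls ps ms :: "real^'n"
  assumes K_sym: "transpose K = K" and K_pd: "\<And>x. x \<noteq> 0 \<Longrightarrow> qf K x > 0"
    and M_sym: "transpose M = M" and M_pd: "\<And>x. x \<noteq> 0 \<Longrightarrow> qf M x > 0"
    and W_diag: "\<And>i j. i \<noteq> j \<Longrightarrow> W $ i $ j = 0" and W_pos: "\<And>i. W $ i $ i > 0"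
    and gamma: "\<gamma> = 4 \<or> \<gamma> = 5"
    and MW: "\<And>z. qf M z \<le> qf W z" and WM: "\<And>z. qf W z \<le> \<gamma> * qf M z"
    and ab: "a \<le> 0" "0 \<le> b" and alpha: "\<alpha> > 0" and beta: "\<beta> > 0"
    and opt: "\<And>l q m. Phi_h K M yd yr \<alpha> \<beta> a b ls ps ms \<le> Phi_h K M yd yr \<alpha> \<beta> a b l q m"
    and init: "in_box \<beta> (lam 0)"
    and alg: "sgs_mabcd K M W \<gamma> yd yr \<alpha> \<beta> a b lam p mu"
  shows "(\<forall>k\<ge>1. Phi_h K M yd yr \<alpha> \<beta> a b (lam k) (p k) (mu k) - Phi_h K M yd yr \<alpha> \<beta> a b ls ps ms
              \<le> ereal (4 * tau_h K M W \<gamma> \<alpha> (lam 0) (mu 0) ls ms / (real k + 1)\<^sup>2))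
         \<and> bounded (range (\<lambda>k. (lam k, p k, mu k)))"
proof -
  have gpos: "\<gamma> > 0" using gamma by auto
  interpret setting K M W yd yr \<alpha> \<beta> a b \<gamma>
    using K_sym K_pd M_sym M_pd W_diag W_pos MW WM ab alpha beta gpos by unfold_locales auto
  show ?thesis using main[OF opt init alg] tau_eq by simp
qed

end
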